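(* Let $R$ be a commutative domain, $B=R(t,\sigma,H,J)$, and let $\mathcal O=\{\sigma^k(\mathfrak m):k\in\mathbb Z\}\subseteq\operatorname{Maxspec}(R)$ be an infinite orbit. If $M$ is a simple $B$-module which is an $R$-weight module with $\operatorname{Supp}_R(M)\subseteq\mathcal O$, then $\dim_{R/\sigma^k(\mathfrak m)}M_{\sigma^k(\mathfrak m)}\le1$ for all $k\in\mathbb Z$.
   Context: $\Bbbk$ is a field; all algebras are associative unital $\Bbbk$-algebras. For an algebra $R$ and $\sigma\in\operatorname{Aut}_\Bbbk(R)$, $R[t,t^{-1};\sigma]$ is the skew Laurent ring: generated over $R$ by $t,t^{-1}$ with $tt^{-1}=t^{-1}t=1$ and $t^{\pm1}r=\sigma^{\pm1}(r)t^{\pm1}$ for $r\in R$. Given two-sided ideals $H,J$ of $R$, set $I^{(0)}=R$, $I^{(n)}=J\sigma(J)\cdots\sigma^{n-1}(J)$ for $n\ge1$, and $I^{(n)}=\sigma^{-1}(H)\sigma^{-2}(H)\cdots\sigma^{n}(H)$ for $n\le-1$; it is assumed throughout that $I^{(n)}\neq0$ for all $n\in\mathbb Z$. The Bell–Rogalski (BR) algebra is $R(t,\sigma,H,J)=\bigoplus_{n\in\mathbb Z}I^{(n)}t^n\subseteq R[t,t^{-1};\sigma]$. For $R$ a commutative domain, a left $B$-module $M$ is an $R$-weight module if $M=\bigoplus_{\mathfrak m\in\operatorname{Maxspec}(R)}M_{\mathfrak m}$ where $M_{\mathfrak m}=\{v\in M:\mathfrak m v=0\}$ and $\dim_{R/\mathfrak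 m}M_{\mathfrak m}<\infty$ for all $\mathfrak m$; $\operatorname{Supp}_R(M)=\{\mathfrak m:M_{\mathfrak m}\neq0\}$. $\mathbb Z$ acts on $\operatorname{Maxspec}(R)$ by $k\cdot\mathfrak m=\sigma^k(\mathfrak m)$. *)

theory Defs
  imports Main
begin

definition is_ideal :: "'r::comm_ring_1 set \<Rightarrow> bool" where
  "is_ideal I \<longleftrightarrow> 0 \<in> I \<and> (\<forall>a\<in>I. \<forall>b\<in>I. a + b \<in> I) \<and> (\<forall>r. \<forall>a\<in>I. r * a \<in> I)"

definition is_maximal_ideal :: "'r::comm_ring_1 set \<Rightarrow> bool" where
  "is_maximal_ideal m \<longleftrightarrow> is_ideal m \<and> m \<noteq> UNIV \<and>
     (\<forall>J. is_ideal J \<and> m \<subseteq> J \<longrightarrow> J = m \<or> J = UNIV)"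

definition ideal_mult :: "'r::comm_ring_1 set \<Rightarrow> 'r set \<Rightarrow> 'r set" where
  "ideal_mult A B = {(\<Sum>i<(n::nat). a i * b i) | n a b. \<forall>i<n. a i \<in> A \<and> b i \<in> B}"

fun ideal_prod :: "(nat \<Rightarrow> 'r::comm_ring_1 set) \<Rightarrow> nat \<Rightarrow> 'r set" where
  "ideal_prod A 0 = UNIV"
| "ideal_prod A (Suc n) = ideal_mult (ideal_prod A n) (A n)"

definition zpow :: "('r \<Rightarrow> 'r) \<Rightarrow> int \<Rightarrow> 'r \<Rightarrow> 'r" where
  "zpow \<sigma> k = (if 0 \<le> k then \<sigma> ^^ nat k else (inv \<sigma>) ^^ nat (- k))"

text \<open>\<sigma> is a \<Bbbk>-algebra automorphism of R, where the \<Bbbk>-algebra structure of R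
  is given by the ring homomorphism of_k.\<close>
definition k_alg_aut :: "('k::field \<Rightarrow> 'r::comm_ring_1) \<Rightarrow> ('r \<Rightarrow> 'r) \<Rightarrow> bool" where
  "k_alg_aut of_k \<sigma> \<longleftrightarrow> bij \<sigma> \<and> (\<forall>a b. \<sigma> (a + b) = \<sigma> a + \<sigma> b) \<and>
     (\<forall>a b. \<sigma> (a * b) = \<sigma> a * \<sigma> b) \<and> \<sigma> 1 = 1 \<and> (\<forall>c. \<sigma> (of_k c) = of_k c)"

definition k_algebra_str :: "('k::field \<Rightarrow> 'r::comm_ring_1) \<Rightarrow> bool" where
  "k_algebra_str of_k \<longleftrightarrow> (\<forall>a b. of_k (a + b) = of_k a + of_k b) \<and>
     (\<forall>a b. of_k (a * b) = of_k a * of_k b) \<and> of_k 1 = 1"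

definition BR_I :: "('r::comm_ring_1 \<Rightarrow> 'r) \<Rightarrow> 'r set \<Rightarrow> 'r set \<Rightarrow> int \<Rightarrow> 'r set" where
  "BR_I \<sigma> H J n =
     (if n = 0 then UNIV
      else if 0 < n then ideal_prod (\<lambda>i. zpow \<sigma> (int i) ` J) (nat n)
      else ideal_prod (\<lambda>i. zpow \<sigma> (- int (Suc i)) ` H) (nat (- n)))"

text \<open>Elements of R[t,t^-1;\<sigma>] are finitely supported coefficient functions
  f, standing for \<Sum>n f n t^n. Multiplication uses t^i r = \<sigma>^i(r) t^i.\<close>
definition skew_laurent :: "(int \<Rightarrow> 'r::comm_ring_1) set" where
  "skew_laurent = {f. finite {n. f n \<noteq> 0}}"

definition sl_mult :: "('r::comm_ring_1 \<Rightarrow> 'r) \<Rightarrow> (int \<Rightarrow> 'r) \<Rightarrow> (int \<Rightarrow> 'r) \<Rightarrow> (int \<Rightarrow> 'r)" where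
  "sl_mult \<sigma> f g = (\<lambda>n. \<Sum>i\<in>{i. f i \<noteq> 0}. f i * zpow \<sigma> i (g (n - i)))"

definition sl_one :: "int \<Rightarrow> 'r::comm_ring_1" where
  "sl_one = (\<lambda>n. if n = 0 then 1 else 0)"

definition sl_const :: "'r::comm_ring_1 \<Rightarrow> int \<Rightarrow> 'r" where
  "sl_const r = (\<lambda>n. if n = 0 then r else 0)"

text \<open>B = R(t,\<sigma>,H,J) = \<Oplus>_n I^(n) t^n as a subset of R[t,t^-1;\<sigma>].\<close>
definition BR_alg :: "('r::comm_ring_1 \<Rightarrow> 'r) \<Rightarrow> 'r set \<Rightarrow> 'r set \<Rightarrow> (int \<Rightarrow> 'r) set" where
  "BR_alg \<sigma> H J = {f \<in> skew_laurent. \<forall>n. f n \<in> BR_I \<sigma> H J n}"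

definition is_B_module ::
  "('r::comm_ring_1 \<Rightarrow> 'r) \<Rightarrow> 'r set \<Rightarrow> 'r set \<Rightarrow> ((int \<Rightarrow> 'r) \<Rightarrow> 'm::ab_group_add \<Rightarrow> 'm) \<Rightarrow> bool" where
  "is_B_module \<sigma> H J act \<longleftrightarrow>
     (\<forall>b\<in>BR_alg \<sigma> H J. \<forall>b'\<in>BR_alg \<sigma> H J. \<forall>v. act (\<lambda>n. b n + b' n) v = act b v + act b' v) \<and>
     (\<forall>b\<in>BR_alg \<sigma> H J. \<forall>v w. act b (v + w) = act b v + act b w) \<and>
     (\<forall>v. act sl_one v = v) \<and>
     (\<forall>b\<in>BR_alg \<sigma> H J. \<forall>b'\<in>BR_alg \<sigma> H J. \<forall>v. act (sl_mult \<sigma> b b') v = act b (act b' v))"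

definition is_submodule ::
  "('r::comm_ring_1 \<Rightarrow> 'r) \<Rightarrow> 'r set \<Rightarrow> 'r set \<Rightarrow> ((int \<Rightarrow> 'r) \<Rightarrow> 'm::ab_group_add \<Rightarrow> 'm) \<Rightarrow> 'm set \<Rightarrow> bool" where
  "is_submodule \<sigma> H J act N \<longleftrightarrow> 0 \<in> N \<and> (\<forall>v\<in>N. \<forall>w\<in>N. v + w \<in> N) \<and>
     (\<forall>b\<in>BR_alg \<sigma> H J. \<forall>v\<in>N. act b v \<in> N)"

definition is_simple_B_module ::
  "('r::comm_ring_1 \<Rightarrow> 'r) \<Rightarrow> 'r set \<Rightarrow> 'r set \<Rightarrow> ((int \<Rightarrow> 'r) \<Rightarrow> 'm::ab_group_add \<Rightarrow> 'm) \<Rightarrow> bool" where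
  "is_simple_B_module \<sigma> H J act \<longleftrightarrow> is_B_module \<sigma> H J act \<and> (UNIV :: 'm set) \<noteq> {0} \<and>
     (\<forall>N. is_submodule \<sigma> H J act N \<longrightarrow> N = {0} \<or> N = UNIV)"

definition weight_space :: "((int \<Rightarrow> 'r::comm_ring_1) \<Rightarrow> 'm::ab_group_add \<Rightarrow> 'm) \<Rightarrow> 'r set \<Rightarrow> 'm set" where
  "weight_space act m = {v. \<forall>r\<in>m. act (sl_const r) v = 0}"

text \<open>M_m is spanned over R/m (equivalently over R, acting via R/m) by n vectors.\<close>
definition weight_spanned_by :: "((int \<Rightarrow> 'r::comm_ring_1) \<Rightarrow> 'm::ab_group_add \<Rightarrow> 'm) \<Rightarrow> 'r set \<Rightarrow> nat \<Rightarrow> bool" where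
  "weight_spanned_by act m n \<longleftrightarrow> (\<exists>vs. length vs = n \<and> set vs \<subseteq> weight_space act m \<and>
     (\<forall>w\<in>weight_space act m. \<exists>c. w = (\<Sum>i<n. act (sl_const (c i)) (vs ! i))))"

text \<open>Dimension of M_m over R/m: minimal size of a spanning family (when finite).\<close>
definition weight_dim :: "((int \<Rightarrow> 'r::comm_ring_1) \<Rightarrow> 'm::ab_group_add \<Rightarrow> 'm) \<Rightarrow> 'r set \<Rightarrow> nat" where
  "weight_dim act m = (LEAST n. weight_spanned_by act m n)"

definition is_weight_module :: "((int \<Rightarrow> 'r::comm_ring_1) \<Rightarrow> 'm::ab_group_add \<Rightarrow> 'm) \<Rightarrow> bool" where
  "is_weight_module act \<longleftrightarrow>
     (\<forall>v. \<exists>S w. finite S \<and> (\<forall>m\<in>S. is_maximal_ideal m \<and> w m \<in> weight_space act m) \<and>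
            v = (\<Sum>m\<in>S. w m)) \<and>
     (\<forall>S w. finite S \<and> (\<forall>m\<in>S. is_maximal_ideal m \<and> w m \<in> weight_space act m) \<and>
            (\<Sum>m\<in>S. w m) = 0 \<longrightarrow> (\<forall>m\<in>S. w m = 0)) \<and>
     (\<forall>m. is_maximal_ideal m \<longrightarrow> (\<exists>n. weight_spanned_by act m n))"

definition weight_support :: "((int \<Rightarrow> 'r::comm_ring_1) \<Rightarrow> 'm::ab_group_add \<Rightarrow> 'm) \<Rightarrow> 'r set set" where
  "weight_support act = {m. is_maximal_ideal m \<and> weight_space act m \<noteq> {0}}"

end

theory Submission
  imports Defs
begin

definition ring_aut :: "('r::comm_ring_1 \<Rightarrow> 'r) \<Rightarrow> bool" where
  "ring_aut f \<longleftrightarrow> bij f \<and> (\<forall>a b. f (a+b) = f a + f b) \<and> (\<forall>a b. f (a*b) = f a * f b)"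

lemma ring_aut_0: "ring_aut f \<Longrightarrow> f 0 = 0"
  unfolding ring_aut_def by (metis add_cancel_right_right add_0)

lemma ring_aut_add: "ring_aut f \<Longrightarrow> f (a+b) = f a + f b"
  unfolding ring_aut_def by blast

lemma ring_aut_mult: "ring_aut f \<Longrightarrow> f (a*b) = f a * f b"
  unfolding ring_aut_def by blast

lemma ring_aut_inv: assumes "ring_aut f" shows "ring_aut (inv f)"
proof -
  have b: "bij f" using assms unfolding ring_aut_def by blast
  have "inv f (a+b) = inv f a + inv f b" for a b
  proof -
    have "f (inv f a + inv f b) = a + b" using b assms
      by (simp add: ring_aut_add bij_inv_eq_iff surj_f_inv_f bij_is_surj)
    thus ?thesis using b by (metis bij_inv_eq_iff)
  qed
  moreover have "inv f (a*b) = inv f a * inv f b" for a b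
  proof -
    have "f (inv f a * inv f b) = a * b" using b assms
      by (simp add: ring_aut_mult surj_f_inv_f bij_is_surj)
    thus ?thesis using b by (metis bij_inv_eq_iff)
  qed
  ultimately show ?thesis using b bij_imp_bij_inv unfolding ring_aut_def by blast
qed

lemma ring_aut_funpow: assumes "ring_aut f" shows "ring_aut (f ^^ n)"
proof (induction n)
  case 0 thus ?case using bij_id by (simp add: ring_aut_def id_def)
next
  case (Suc n)
  thus ?case using assms unfolding ring_aut_def by (auto intro: bij_comp simp: bij_comp)
qed

lemma ring_aut_zpow: "ring_aut \<sigma> \<Longrightarrow> ring_aut (zpow \<sigma> k)"
  unfolding zpow_def by (simp add: ring_aut_funpow ring_aut_inv)

lemma zpow_0[simp]: "zpow \<sigma> 0 = id"
  unfolding zpow_def by simp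

lemma zpow_succ: assumes "bij \<sigma>" shows "zpow \<sigma> (a+1) x = \<sigma> (zpow \<sigma> a x)"
proof (cases "0 \<le> a")
  case True
  then have "nat (a+1) = Suc (nat a)" by simp
  thus ?thesis using True unfolding zpow_def by simp
next
  case False
  show ?thesis
  proof (cases "a = -1")
    case True thus ?thesis unfolding zpow_def using assms by (simp add: bij_is_surj surj_f_inv_f)
  next
    case F2: False
    then have "nat (-a) = Suc (nat (-(a+1)))" using False by simp
    then have "zpow \<sigma> a x = inv \<sigma> (zpow \<sigma> (a+1) x)" using False F2 unfolding zpow_def by simp
    thus ?thesis using assms by (simp add: bij_is_surj surj_f_inv_f)
  qed
qed

lemma zpow_pred: assumes "bij \<sigma>" shows "zpow \<sigma> (a-1) x = inv \<sigma> (zpow \<sigma> a x)"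
  using zpow_succ[OF assms, of "a-1" x] assms by (simp add: bij_is_inj)

lemma zpow_add: assumes "bij \<sigma>" shows "zpow \<sigma> a (zpow \<sigma> b x) = zpow \<sigma> (a+b) x"
proof (induction a rule: int_induct[where k=0])
  case base thus ?case by simp
next
  case (step1 i) thus ?case using zpow_succ[OF assms] by (metis add.commute add.left_commute)
next
  case (step2 i) thus ?case using zpow_pred[OF assms] by (metis add.commute add_diff_eq)
qed

lemma zpow_cancel: "bij \<sigma> \<Longrightarrow> zpow \<sigma> a (zpow \<sigma> (-a) x) = x"
  by (simp add: zpow_add)

lemma ring_aut_ideal: assumes "ring_aut f" "is_ideal I" shows "is_ideal (f ` I)"
proof -
  have s: "surj f" using assms(1) unfolding ring_aut_def by (simp add: bij_is_surj)
  have "0 \<in> f ` I" using assms by (metis image_eqI ring_aut_0 is_ideal_def)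
  moreover have "\<forall>a\<in>f`I. \<forall>b\<in>f`I. a + b \<in> f ` I"
    using assms unfolding is_ideal_def by (auto simp: ring_aut_add[OF assms(1), symmetric])
  moreover have "\<forall>r. \<forall>a\<in>f`I. r * a \<in> f ` I"
  proof (intro allI ballI)
    fix r a assume "a \<in> f ` I"
    then obtain x where x: "x \<in> I" "a = f x" by blast
    obtain y where "r = f y" using s by (metis surjD)
    then have "r * a = f (y * x)" using x assms(1) by (simp add: ring_aut_mult)
    thus "r * a \<in> f ` I" using x assms(2) unfolding is_ideal_def by blast
  qed
  ultimately show ?thesis unfolding is_ideal_def by blast
qed

lemma ring_aut_maximal: assumes "ring_aut f" "is_maximal_ideal m" shows "is_maximal_ideal (f ` m)"
proof -
  have b: "bij f" using assms(1) unfolding ring_aut_def by blast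
  have im: "is_ideal m" "m \<noteq> UNIV" using assms(2) unfolding is_maximal_ideal_def by auto
  have "is_ideal (f ` m)" using ring_aut_ideal assms im by blast
  moreover have "f ` m \<noteq> UNIV"
  proof
    assume "f ` m = UNIV"
    then have "m = UNIV" using b by (metis bij_is_inj inj_image_eq_iff bij_is_surj)
    thus False using im by blast
  qed
  moreover have "\<forall>J. is_ideal J \<and> f ` m \<subseteq> J \<longrightarrow> J = f ` m \<or> J = UNIV"
  proof (intro allI impI)
    fix J assume J: "is_ideal J \<and> f ` m \<subseteq> J"
    have "is_ideal (f -` J)"
      using J assms(1) unfolding is_ideal_def by (auto simp: ring_aut_0 ring_aut_add ring_aut_mult)
    moreover have "m \<subseteq> f -` J" using J by blast
    ultimately have "f -` J = m \<or> f -` J = UNIV" using assms(2) unfolding is_maximal_ideal_def by blast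
    moreover have "f ` (f -` J) = J" using b by (simp add: bij_is_surj surj_image_vimage_eq)
    ultimately show "J = f ` m \<or> J = UNIV" using b by (metis bij_is_surj)
  qed
  ultimately show ?thesis unfolding is_maximal_ideal_def by blast
qed


lemma sum_lessThan_concat: "(\<Sum>i<(n::nat)+k. g i) = (\<Sum>i<n. g i) + (\<Sum>i<k. g (n+i))"
  by (induction k) (simp_all add: add.assoc)

lemma ideal_sum: "is_ideal I \<Longrightarrow> (\<forall>i<(n::nat). f i \<in> I) \<Longrightarrow> (\<Sum>i<n. f i) \<in> I"
  by (induction n) (auto simp: is_ideal_def)

lemma ideal_mult_intro: "(\<forall>i<(n::nat). a i \<in> X \<and> b i \<in> Y) \<Longrightarrow> (\<Sum>i<n. a i * b i) \<in> ideal_mult X Y"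
  unfolding ideal_mult_def
  by blast

lemma ideal_mult_in: "x \<in> X \<Longrightarrow> y \<in> Y \<Longrightarrow> x * y \<in> ideal_mult X Y"
  unfolding ideal_mult_def
  by (rule CollectI, rule exI[of _ 1], rule exI[of _ "\<lambda>_. x"], rule exI[of _ "\<lambda>_. y"]) simp

lemma ideal_mult_ideal: assumes "is_ideal X" shows "is_ideal (ideal_mult X Y)"
proof -
  have "0 \<in> ideal_mult X Y" unfolding ideal_mult_def
    by (rule CollectI, rule exI[of _ 0]) simp
  moreover have "a + b \<in> ideal_mult X Y" if ha: "a \<in> ideal_mult X Y" and hb: "b \<in> ideal_mult X Y" for a b
  proof -
    obtain n :: nat and x y where a: "a = (\<Sum>i<n. x i * y i)" "\<forall>i<n. x i \<in> X \<and> y i \<in> Y"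
      using ha unfolding ideal_mult_def by blast
    obtain k :: nat and x' y' where b: "b = (\<Sum>i<k. x' i * y' i)" "\<forall>i<k. x' i \<in> X \<and> y' i \<in> Y"
      using hb unfolding ideal_mult_def by blast
    define u where "u i = (if i < n then x i else x' (i - n))" for i
    define w where "w i = (if i < n then y i else y' (i - n))" for i
    have "a + b = (\<Sum>i<n+k. u i * w i)"
      unfolding sum_lessThan_concat a b u_def w_def by simp
    moreover have "\<forall>i<n+k. u i \<in> X \<and> w i \<in> Y" using a b unfolding u_def w_def by auto
    ultimately show ?thesis using ideal_mult_intro[of "n+k" u X w Y] by simp
  qed
  moreover have "r * a \<in> ideal_mult X Y" if ha: "a \<in> ideal_mult X Y" for r a
  proof -
    obtain n :: nat and x y where a: "a = (\<Sum>i<n. x i * y i)" "\<forall>i<n. x i \<in> X \<and> y i \<in> Y"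
      using ha unfolding ideal_mult_def by blast
    have "r * a = (\<Sum>i<n. (r * x i) * y i)" unfolding a by (simp add: sum_distrib_left mult.assoc)
    moreover have "\<forall>i<n. r * x i \<in> X \<and> y i \<in> Y" using a assms unfolding is_ideal_def by auto
    ultimately show ?thesis using ideal_mult_intro[of n "\<lambda>i. r * x i" X y Y] by simp
  qed
  ultimately show ?thesis unfolding is_ideal_def by blast
qed

lemma ideal_mult_sub1: assumes "is_ideal X" shows "ideal_mult X Y \<subseteq> X"
proof
  fix a assume "a \<in> ideal_mult X Y"
  then obtain n :: nat and x y where a: "a = (\<Sum>i<n. x i * y i)" "\<forall>i<n. x i \<in> X \<and> y i \<in> Y"
    unfolding ideal_mult_def by blast
  have "\<forall>i<n. x i * y i \<in> X" using a assms unfolding is_ideal_def by (metis mult.commute)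
  thus "a \<in> X" using a ideal_sum[OF assms] by simp
qed

lemma ideal_mult_mono1: "X \<subseteq> X' \<Longrightarrow> ideal_mult X Y \<subseteq> ideal_mult X' Y"
  unfolding ideal_mult_def by blast

lemma is_ideal_UNIV: "is_ideal UNIV" unfolding is_ideal_def by simp

lemma ideal_prod_ideal: "is_ideal (ideal_prod A n)"
  by (induction n) (simp_all add: is_ideal_UNIV ideal_mult_ideal)

lemma ideal_absorb: "is_ideal I \<Longrightarrow> x \<in> I \<Longrightarrow> r * x \<in> I"
  unfolding is_ideal_def by blast

lemma ideal_absorb': "is_ideal I \<Longrightarrow> x \<in> I \<Longrightarrow> x * r \<in> I"
  unfolding is_ideal_def by (metis mult.commute)

lemma ideal_prod_T1: "x \<in> ideal_prod A n \<Longrightarrow> y \<in> ideal_prod (\<lambda>i. A (i+n)) m \<Longrightarrow> x * y \<in> ideal_prod A (n+m)"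
proof (induction m arbitrary: y)
  case 0 thus ?case using ideal_absorb'[OF ideal_prod_ideal] by simp
next
  case (Suc m)
  obtain k :: nat and c d where y: "y = (\<Sum>i<k. c i * d i)" "\<forall>i<k. c i \<in> ideal_prod (\<lambda>i. A (i+n)) m \<and> d i \<in> A (m+n)"
    using Suc.prems(2) by (auto simp: ideal_mult_def)
  have "x * y = (\<Sum>i<k. (x * c i) * d i)" unfolding y by (simp add: sum_distrib_left mult.assoc)
  moreover have "\<forall>i<k. x * c i \<in> ideal_prod A (n+m) \<and> d i \<in> A (n+m)" using y Suc by (simp add: add.commute)
  ultimately show ?case using ideal_mult_intro by (simp add: add.commute)
qed

lemma ideal_prod_T3: "ideal_prod A (n+m) \<subseteq> ideal_prod A n"
proof (induction m)
  case 0 thus ?case by simp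
next
  case (Suc m) thus ?case using ideal_mult_sub1[OF ideal_prod_ideal] by (simp, blast)
qed

lemma ideal_prod_T5: "ideal_prod A (n+m) \<subseteq> ideal_prod (\<lambda>i. A (i+n)) m"
proof (induction m)
  case 0 thus ?case by simp
next
  case (Suc m) thus ?case using ideal_mult_mono1 by (simp add: add.commute)
qed

lemma ring_aut_sum: "ring_aut f \<Longrightarrow> f (\<Sum>i<(n::nat). g i) = (\<Sum>i<n. f (g i))"
  by (induction n) (simp_all add: ring_aut_0 ring_aut_add)

lemma ideal_prod_T2: "ring_aut f \<Longrightarrow> x \<in> ideal_prod A n \<Longrightarrow> f x \<in> ideal_prod (\<lambda>i. f ` A i) n"
proof (induction n arbitrary: x)
  case 0 thus ?case by simp
next
  case (Suc n)
  obtain k :: nat and c d where x: "x = (\<Sum>i<k. c i * d i)" "\<forall>i<k. c i \<in> ideal_prod A n \<and> d i \<in> A n"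
    using Suc.prems(2) by (auto simp: ideal_mult_def)
  have "f x = (\<Sum>i<k. f (c i) * f (d i))" unfolding x using Suc.prems(1) by (simp add: ring_aut_sum ring_aut_mult)
  moreover have "\<forall>i<k. f (c i) \<in> ideal_prod (\<lambda>i. f ` A i) n \<and> f (d i) \<in> f ` A n" using x Suc by auto
  ultimately show ?case using ideal_mult_intro by (simp add: add.commute)
qed


lemma ideal_prod_le: "k \<le> n \<Longrightarrow> ideal_prod A n \<subseteq> ideal_prod A k"
  using ideal_prod_T3[of A k "n-k"] by simp

lemma ideal_prod_shift: "k \<le> n \<Longrightarrow> ideal_prod A n \<subseteq> ideal_prod (\<lambda>i. A (i+k)) (n-k)"
  using ideal_prod_T5[of A k "n-k"] by simp

lemma zpow_image: "bij \<sigma> \<Longrightarrow> zpow \<sigma> c ` (zpow \<sigma> d ` X) = zpow \<sigma> (c+d) ` X"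
  by (simp add: image_image zpow_add)

lemma BR_I_ideal: "is_ideal (BR_I \<sigma> H J n)"
  unfolding BR_I_def by (simp add: is_ideal_UNIV ideal_prod_ideal)

lemma BR_I_pos: "0 < n \<Longrightarrow> BR_I \<sigma> H J n = ideal_prod (\<lambda>i. zpow \<sigma> (int i) ` J) (nat n)"
  unfolding BR_I_def by simp

lemma BR_I_neg: "n < 0 \<Longrightarrow> BR_I \<sigma> H J n = ideal_prod (\<lambda>i. zpow \<sigma> (- int (Suc i)) ` H) (nat (-n))"
  unfolding BR_I_def by simp

lemma BR_I_mult:
  assumes ra: "ring_aut \<sigma>" and r: "r \<in> BR_I \<sigma> H J a" and s: "s \<in> BR_I \<sigma> H J b"
  shows "r * zpow \<sigma> a s \<in> BR_I \<sigma> H J (a+b)"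
proof -
  have bj: "bij \<sigma>" using ra unfolding ring_aut_def by blast
  have rz: "ring_aut (zpow \<sigma> a)" using ring_aut_zpow[OF ra] .
  define P where "P i = zpow \<sigma> (int i) ` J" for i
  define Q where "Q i = zpow \<sigma> (- int (Suc i)) ` H" for i
  have I: "is_ideal (BR_I \<sigma> H J (a+b))" by (rule BR_I_ideal)
  show ?thesis
  proof (cases "a = 0 \<or> b = 0 \<or> a + b = 0")
    case True
    moreover have "a = 0 \<Longrightarrow> ?thesis" using s ideal_absorb[OF BR_I_ideal] by simp
    moreover have "b = 0 \<Longrightarrow> ?thesis" using r ideal_absorb'[OF BR_I_ideal] by simp
    moreover have "a + b = 0 \<Longrightarrow> ?thesis" unfolding BR_I_def by simp
    ultimately show ?thesis by blast
  next
    case False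
    then have nz: "a \<noteq> 0" "b \<noteq> 0" "a + b \<noteq> 0" by auto
    show ?thesis
    proof (cases "0 < a")
      case apos: True
      have rP: "r \<in> ideal_prod P (nat a)" using r BR_I_pos[OF apos, of \<sigma> H J] unfolding P_def by simp
      show ?thesis
      proof (cases "0 < b")
        case bpos: True
        have "s \<in> ideal_prod P (nat b)" using s BR_I_pos[OF bpos, of \<sigma> H J] unfolding P_def by simp
        from ideal_prod_T2[OF rz this]
        have "zpow \<sigma> a s \<in> ideal_prod (\<lambda>i. P (i + nat a)) (nat b)"
          unfolding P_def zpow_image[OF bj] using apos by (simp add: add.commute)
        from ideal_prod_T1[OF rP this] show ?thesis
          using apos bpos BR_I_pos[of "a+b" \<sigma> H J] unfolding P_def by (simp add: nat_add_distrib)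
      next
        case bneg: False
        then have bneg: "b < 0" using nz by simp
        show ?thesis
        proof (cases "0 < a + b")
          case True
          have "r \<in> ideal_prod P (nat (a+b))" proof -
            have "nat (a+b) \<le> nat a" using bneg by simp
            thus ?thesis using rP ideal_prod_le[of "nat (a+b)" "nat a" P] by blast
          qed
          then show ?thesis using ideal_absorb'[OF ideal_prod_ideal] BR_I_pos[OF True, of \<sigma> H J] unfolding P_def by blast
        next
          case False
          then have abn: "a + b < 0" using nz by simp
          have "s \<in> ideal_prod Q (nat (-b))" using s BR_I_neg[OF bneg, of \<sigma> H J] unfolding Q_def by simp
          from ideal_prod_T2[OF rz this]
          have "zpow \<sigma> a s \<in> ideal_prod (\<lambda>i. zpow \<sigma> (a - (1 + int i)) ` H) (nat (-b))"
            unfolding Q_def zpow_image[OF bj] by (simp add: algebra_simps)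
          moreover have le: "nat a \<le> nat (-b)" using abn by simp
          ultimately
          have "zpow \<sigma> a s \<in> ideal_prod (\<lambda>i. zpow \<sigma> (a - (1 + int (i + nat a))) ` H) (nat (-b) - nat a)"
            using ideal_prod_shift[OF le, of "\<lambda>i. zpow \<sigma> (a - (1 + int i)) ` H"] by blast
          moreover have "(\<lambda>i. zpow \<sigma> (a - (1 + int (i + nat a))) ` H) = Q" unfolding Q_def using apos by auto
          moreover have "nat (-b) - nat a = nat (-(a+b))" using apos abn by simp
          ultimately have "zpow \<sigma> a s \<in> BR_I \<sigma> H J (a+b)" using BR_I_neg[OF abn, of \<sigma> H J] unfolding Q_def by simp
          then show ?thesis using ideal_absorb[OF I] by blast
        qed
      qed
    next
      case aneg: False
      then have aneg: "a < 0" using nz by simp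
      have rQ: "r \<in> ideal_prod Q (nat (-a))" using r BR_I_neg[OF aneg, of \<sigma> H J] unfolding Q_def by simp
      show ?thesis
      proof (cases "0 < b")
        case bpos: True
        show ?thesis
        proof (cases "0 < a + b")
          case abp: True
          have "s \<in> ideal_prod P (nat b)" using s BR_I_pos[OF bpos, of \<sigma> H J] unfolding P_def by simp
          from ideal_prod_T2[OF rz this]
          have "zpow \<sigma> a s \<in> ideal_prod (\<lambda>i. zpow \<sigma> (a + int i) ` J) (nat b)"
            unfolding P_def zpow_image[OF bj] by simp
          moreover have le: "nat (-a) \<le> nat b" using abp by simp
          ultimately
          have "zpow \<sigma> a s \<in> ideal_prod (\<lambda>i. zpow \<sigma> (a + int (i + nat (-a))) ` J) (nat b - nat (-a))"
            using ideal_prod_shift[OF le, of "\<lambda>i. zpow \<sigma> (a + int i) ` J"] by blast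
          moreover have "(\<lambda>i. zpow \<sigma> (a + int (i + nat (-a))) ` J) = P" unfolding P_def using aneg by auto
          moreover have "nat b - nat (-a) = nat (a+b)" using aneg abp by simp
          ultimately have "zpow \<sigma> a s \<in> BR_I \<sigma> H J (a+b)" using BR_I_pos[OF abp, of \<sigma> H J] unfolding P_def by simp
          then show ?thesis using ideal_absorb[OF I] by blast
        next
          case False
          then have abn: "a + b < 0" using nz by simp
          have "r \<in> ideal_prod Q (nat (-(a+b)))" proof -
            have "nat (-(a+b)) \<le> nat (-a)" using bpos by simp
            thus ?thesis using rQ ideal_prod_le[of "nat (-(a+b))" "nat (-a)" Q] by blast
          qed
          then show ?thesis using ideal_absorb'[OF ideal_prod_ideal] BR_I_neg[OF abn, of \<sigma> H J] unfolding Q_def by blast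
        qed
      next
        case False
        then have bneg: "b < 0" using nz by simp
        have "s \<in> ideal_prod Q (nat (-b))" using s BR_I_neg[OF bneg, of \<sigma> H J] unfolding Q_def by simp
        from ideal_prod_T2[OF rz this]
        have "zpow \<sigma> a s \<in> ideal_prod (\<lambda>i. Q (i + nat (-a))) (nat (-b))"
          unfolding Q_def zpow_image[OF bj] using aneg by (simp add: algebra_simps)
        from ideal_prod_T1[OF rQ this] have "r * zpow \<sigma> a s \<in> ideal_prod Q (nat (-a) + nat (-b))" .
        moreover have "nat (-a) + nat (-b) = nat (-(a+b))" using aneg bneg by simp
        ultimately show ?thesis
          using aneg bneg BR_I_neg[of "a+b" \<sigma> H J] unfolding Q_def by simp
      qed
    qed
  qed
qed


definition single :: "int \<Rightarrow> 'r::comm_ring_1 \<Rightarrow> int \<Rightarrow> 'r" where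
  "single n r = (\<lambda>k. if k = n then r else 0)"

lemma sl_const_single: "sl_const r = single 0 r"
  unfolding sl_const_def single_def by simp

lemma zero_in_BR_I: "0 \<in> BR_I \<sigma> H J n"
  using BR_I_ideal unfolding is_ideal_def by blast

lemma single_in_B: "r \<in> BR_I \<sigma> H J n \<Longrightarrow> single n r \<in> BR_alg \<sigma> H J"
  unfolding BR_alg_def skew_laurent_def single_def
  by (auto simp: zero_in_BR_I intro: finite_subset[of _ "{n}"])

lemma const_in_B: "sl_const r \<in> BR_alg \<sigma> H J"
  unfolding sl_const_single by (rule single_in_B) (simp add: BR_I_def)

lemma zero_in_B: "(\<lambda>_::int. 0::'r::comm_ring_1) \<in> BR_alg \<sigma> H J"
  unfolding BR_alg_def skew_laurent_def by (simp add: zero_in_BR_I)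

lemma sl_mult_single_left: "sl_mult \<sigma> (single a r) g = (\<lambda>n. r * zpow \<sigma> a (g (n - a)))"
proof (cases "r = 0")
  case True
  then have "{i. single a r i \<noteq> 0} = {}" unfolding single_def by auto
  thus ?thesis using True unfolding sl_mult_def by simp
next
  case False
  then have "{i. single a r i \<noteq> 0} = {a}" unfolding single_def by auto
  thus ?thesis unfolding sl_mult_def by (simp add: single_def)
qed

lemma single_mult: "ring_aut \<sigma> \<Longrightarrow> sl_mult \<sigma> (single a r) (single b s) = single (a+b) (r * zpow \<sigma> a s)"
  unfolding sl_mult_single_left
  by (rule ext) (auto simp: single_def ring_aut_0[OF ring_aut_zpow])

lemma single_add: "(\<lambda>n. single i r n + single i s n) = single i (r + s)"
  unfolding single_def by auto

locale bmod =
  fixes \<sigma> :: "'r::comm_ring_1 \<Rightarrow> 'r" and H J :: "'r set" and act :: "(int \<Rightarrow> 'r) \<Rightarrow> 'm::ab_group_add \<Rightarrow> 'm"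
  assumes ra: "ring_aut \<sigma>" and modl: "is_B_module \<sigma> H J act"
begin

abbreviation "B \<equiv> BR_alg \<sigma> H J"

lemma bj: "bij \<sigma>" using ra unfolding ring_aut_def by blast

lemma act_addB: "b \<in> B \<Longrightarrow> b' \<in> B \<Longrightarrow> act (\<lambda>n. b n + b' n) v = act b v + act b' v"
  using modl unfolding is_B_module_def by blast

lemma act_addv: "b \<in> B \<Longrightarrow> act b (v + w) = act b v + act b w"
  using modl unfolding is_B_module_def by blast

lemma act_one: "act sl_one v = v"
  using modl unfolding is_B_module_def by blast

lemma act_mult: "b \<in> B \<Longrightarrow> b' \<in> B \<Longrightarrow> act (sl_mult \<sigma> b b') v = act b (act b' v)"
  using modl unfolding is_B_module_def by blast

lemma act_zero_b: "act (\<lambda>_. 0) v = 0"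
proof -
  have "act (\<lambda>n. (\<lambda>_. 0::'r) n + (\<lambda>_. 0) n) v = act (\<lambda>_. 0) v + act (\<lambda>_. 0) v" using act_addB zero_in_B by blast
  thus ?thesis by simp
qed

lemma act_b_zero: "b \<in> B \<Longrightarrow> act b 0 = 0"
  using act_addv[of b 0 0] by simp

lemma act_b_minus: "b \<in> B \<Longrightarrow> act b (- v) = - act b v"
  using act_addv[of b v "-v"] act_b_zero by (simp add: add_eq_0_iff)

lemma act_b_diff: "b \<in> B \<Longrightarrow> act b (v - w) = act b v - act b w"
  using act_addv[of b v "-w"] act_b_minus by simp

lemma res_in_B: "b \<in> B \<Longrightarrow> (\<lambda>n. if n \<in> F then b n else 0) \<in> B"
  unfolding BR_alg_def skew_laurent_def
  by (auto simp: zero_in_BR_I intro: finite_subset[of _ "{n. b n \<noteq> 0}"])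

lemma act_res: assumes "b \<in> B" "finite F"
  shows "act (\<lambda>n. if n \<in> F then b n else 0) x = (\<Sum>i\<in>F. act (single i (b i)) x)"
  using assms(2)
proof (induction F rule: finite_induct)
  case empty
  then show ?case using act_zero_b by simp
next
  case (insert i F)
  have bi: "b i \<in> BR_I \<sigma> H J i" using assms(1) unfolding BR_alg_def by blast
  have "(\<lambda>n. if n \<in> insert i F then b n else 0) = (\<lambda>n. single i (b i) n + (if n \<in> F then b n else 0))"
    using insert.hyps unfolding single_def by auto
  then have "act (\<lambda>n. if n \<in> insert i F then b n else 0) x
     = act (single i (b i)) x + act (\<lambda>n. if n \<in> F then b n else 0) x"
    using act_addB[OF single_in_B[OF bi] res_in_B[OF assms(1)]] by simp
  then show ?case using insert by simp
qed

lemma act_decomp: assumes "b \<in> B"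
  shows "act b x = (\<Sum>i\<in>{n. b n \<noteq> 0}. act (single i (b i)) x)"
proof -
  have f: "finite {n. b n \<noteq> 0}" using assms unfolding BR_alg_def skew_laurent_def by blast
  have "(\<lambda>n. if n \<in> {n. b n \<noteq> 0} then b n else 0) = b" by auto
  thus ?thesis using act_res[OF assms f] by simp
qed

lemma b_coeff: "b \<in> B \<Longrightarrow> b i \<in> BR_I \<sigma> H J i"
  unfolding BR_alg_def by blast

lemma ws_zero: "0 \<in> weight_space act q"
  unfolding weight_space_def using act_b_zero const_in_B by blast

lemma ws_add: "v \<in> weight_space act q \<Longrightarrow> w \<in> weight_space act q \<Longrightarrow> v + w \<in> weight_space act q"
  unfolding weight_space_def using act_addv[OF const_in_B] by simp

lemma ws_diff: "v \<in> weight_space act q \<Longrightarrow> w \<in> weight_space act q \<Longrightarrow> v - w \<in> weight_space act q"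
  unfolding weight_space_def using act_b_diff[OF const_in_B] by simp

lemma ws_shift:
  assumes y: "y \<in> weight_space act q" and r: "r \<in> BR_I \<sigma> H J n"
  shows "act (single n r) y \<in> weight_space act (zpow \<sigma> n ` q)"
  unfolding weight_space_def
proof (intro CollectI ballI)
  fix c assume "c \<in> zpow \<sigma> n ` q"
  then obtain c0 where c0: "c0 \<in> q" "c = zpow \<sigma> n c0" by blast
  have sB: "single n r \<in> B" by (rule single_in_B[OF r])
  have "act (sl_const c) (act (single n r) y) = act (sl_mult \<sigma> (sl_const c) (single n r)) y"
    using act_mult[OF const_in_B sB] by simp
  also have "\<dots> = act (single n (c * r)) y"
    unfolding sl_const_single single_mult[OF ra] by simp
  also have "\<dots> = act (single n (r * zpow \<sigma> n c0)) y" using c0 by (simp add: mult.commute)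
  also have "\<dots> = act (sl_mult \<sigma> (single n r) (sl_const c0)) y"
    unfolding sl_const_single single_mult[OF ra] by simp
  also have "\<dots> = act (single n r) (act (sl_const c0) y)"
    using act_mult[OF sB const_in_B] by simp
  also have "\<dots> = 0" using y c0 act_b_zero[OF sB] unfolding weight_space_def by simp
  finally show "act (sl_const c) (act (single n r) y) = 0" .
qed

end

lemma sl_one_const: "sl_one = sl_const 1"
  unfolding sl_one_def sl_const_def by simp

locale bmod_pt = bmod \<sigma> H J act
  for \<sigma> :: "'r::comm_ring_1 \<Rightarrow> 'r" and H J :: "'r set" and act :: "(int \<Rightarrow> 'r) \<Rightarrow> 'm::ab_group_add \<Rightarrow> 'm" +
  fixes p :: "'r set" and v :: 'm
  assumes vp: "v \<in> weight_space act p"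
    and indep: "\<forall>S w. finite S \<and> (\<forall>m\<in>S. is_maximal_ideal m \<and> w m \<in> weight_space act m) \<and>
            (\<Sum>m\<in>S. w m) = 0 \<longrightarrow> (\<forall>m\<in>S. w m = 0)"
    and orbit: "\<And>n. n \<noteq> 0 \<Longrightarrow> zpow \<sigma> n ` p \<noteq> p"
    and omax: "\<And>n. is_maximal_ideal (zpow \<sigma> n ` p)"
begin

definition U :: "'m set" where "U = {act (sl_const c) v | c. True}"

lemma pmax: "is_maximal_ideal p" using omax[of 0] by simp

lemma U_0: "0 \<in> U"
proof -
  have "sl_const (0::'r) = (\<lambda>_. 0)" unfolding sl_const_def by auto
  thus ?thesis unfolding U_def using act_zero_b by (metis (mono_tags, lifting) mem_Collect_eq)
qed

lemma U_add: "a \<in> U \<Longrightarrow> b \<in> U \<Longrightarrow> a + b \<in> U"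
proof -
  assume "a \<in> U" "b \<in> U"
  then obtain c c' where "a = act (sl_const c) v" "b = act (sl_const c') v" unfolding U_def by blast
  moreover have "(\<lambda>n. sl_const c n + sl_const c' n) = sl_const (c + c')" unfolding sl_const_def by auto
  ultimately have "a + b = act (sl_const (c + c')) v" using act_addB[OF const_in_B const_in_B] by metis
  thus ?thesis unfolding U_def by blast
qed

lemma U_ws: "a \<in> U \<Longrightarrow> a \<in> weight_space act p"
proof -
  assume "a \<in> U"
  then obtain c where a: "a = act (sl_const c) v" unfolding U_def by blast
  show ?thesis unfolding weight_space_def
  proof (intro CollectI ballI)
    fix r assume r: "r \<in> p"
    have "act (sl_const r) a = act (sl_mult \<sigma> (sl_const r) (sl_const c)) v"
      unfolding a using act_mult[OF const_in_B const_in_B] by simp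
    also have "\<dots> = act (sl_mult \<sigma> (sl_const c) (sl_const r)) v"
      unfolding sl_const_single single_mult[OF ra] by (simp add: mult.commute)
    also have "\<dots> = act (sl_const c) (act (sl_const r) v)"
      using act_mult[OF const_in_B const_in_B] by simp
    also have "\<dots> = 0" using vp r act_b_zero[OF const_in_B] unfolding weight_space_def by simp
    finally show "act (sl_const r) a = 0" .
  qed
qed

definition Good :: "'m \<Rightarrow> bool" where
  "Good y \<longleftrightarrow> (\<exists>u\<in>U. \<exists>S w. finite S \<and> p \<notin> S \<and>
     (\<forall>q\<in>S. is_maximal_ideal q \<and> w q \<in> weight_space act q) \<and> y = u + (\<Sum>q\<in>S. w q))"

lemma Good_U: "u \<in> U \<Longrightarrow> Good u"
  unfolding Good_def by (rule bexI[of _ u], rule exI[of _ "{}"]) auto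

lemma Good_0: "Good 0" using Good_U U_0 by blast

lemma Good_ws: "q \<noteq> p \<Longrightarrow> is_maximal_ideal q \<Longrightarrow> y \<in> weight_space act q \<Longrightarrow> Good y"
  unfolding Good_def
  by (rule bexI[of _ 0], rule exI[of _ "{q}"], rule exI[of _ "\<lambda>_. y"]) (auto simp: U_0)

lemma Good_add: assumes "Good a" "Good b" shows "Good (a + b)"
proof -
  obtain u S w where a: "u \<in> U" "finite S" "p \<notin> S" "\<forall>q\<in>S. is_maximal_ideal q \<and> w q \<in> weight_space act q"
      "a = u + (\<Sum>q\<in>S. w q)" using assms(1) unfolding Good_def by blast
  obtain u' S' w' where b: "u' \<in> U" "finite S'" "p \<notin> S'" "\<forall>q\<in>S'. is_maximal_ideal q \<and> w' q \<in> weight_space act q"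
      "b = u' + (\<Sum>q\<in>S'. w' q)" using assms(2) unfolding Good_def by blast
  define w'' where "w'' q = (if q \<in> S then w q else 0) + (if q \<in> S' then w' q else 0)" for q
  have fin: "finite (S \<union> S')" using a b by simp
  have "(\<Sum>q\<in>S \<union> S'. w'' q) = (\<Sum>q\<in>S \<union> S'. if q \<in> S then w q else 0) + (\<Sum>q\<in>S \<union> S'. if q \<in> S' then w' q else 0)"
    unfolding w''_def by (simp add: sum.distrib)
  also have "\<dots> = (\<Sum>q\<in>S. w q) + (\<Sum>q\<in>S'. w' q)"
    using sum.inter_restrict[OF fin, of w S] sum.inter_restrict[OF fin, of w' S']
    by (simp add: Int_absorb1 Int_absorb2 Un_Int_eq)
  finally have sums: "(\<Sum>q\<in>S \<union> S'. w'' q) = (\<Sum>q\<in>S. w q) + (\<Sum>q\<in>S'. w' q)" .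
  have "a + b = (u + u') + (\<Sum>q\<in>S \<union> S'. w'' q)" unfolding sums a(5) b(5) by (simp add: algebra_simps)
  moreover have "\<forall>q\<in>S \<union> S'. is_maximal_ideal q \<and> w'' q \<in> weight_space act q"
    using a(4) b(4) unfolding w''_def by (auto intro!: ws_add simp: ws_zero)
  moreover have "u + u' \<in> U" using U_add a(1) b(1) by blast
  ultimately show ?thesis unfolding Good_def using fin a(3) b(3) by blast
qed

lemma Good_sum: "finite F \<Longrightarrow> (\<forall>i\<in>F. Good (f i)) \<Longrightarrow> Good (\<Sum>i\<in>F. f i)"
  by (induction F rule: finite_induct) (auto simp: Good_0 Good_add)

lemma Good_final: assumes w: "w \<in> weight_space act p" and g: "Good w" shows "w \<in> U"
proof -
  obtain u S f where a: "u \<in> U" "finite S" "p \<notin> S" "\<forall>q\<in>S. is_maximal_ideal q \<and> f q \<in> weight_space act q"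
      "w = u + (\<Sum>q\<in>S. f q)" using g unfolding Good_def by blast
  define f' where "f' q = (if q = p then u - w else f q)" for q
  have "(\<Sum>q\<in>insert p S. f' q) = (u - w) + (\<Sum>q\<in>S. f' q)" using a(2,3) unfolding f'_def by simp
  also have "(\<Sum>q\<in>S. f' q) = (\<Sum>q\<in>S. f q)" using a(3) unfolding f'_def by (intro sum.cong) auto
  finally have "(\<Sum>q\<in>insert p S. f' q) = 0" using a(5) by simp
  moreover have "\<forall>q\<in>insert p S. is_maximal_ideal q \<and> f' q \<in> weight_space act q"
    using a(4) pmax ws_diff[OF U_ws[OF a(1)] w] unfolding f'_def by auto
  ultimately have "f' p = 0" using indep a(2) by (metis finite_insert insertI1)
  then have "u = w" unfolding f'_def by simp
  thus ?thesis using a(1) by simp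
qed

lemma act_sum: assumes "b \<in> B" "finite F" shows "act b (\<Sum>j\<in>F. g j) = (\<Sum>j\<in>F. act b (g j))"
  using assms(2) by (induction F rule: finite_induct) (auto simp: act_b_zero[OF assms(1)] act_addv[OF assms(1)])

definition N :: "'m set" where "N = {x. \<forall>b\<in>B. Good (act b x)}"

lemma N_sub: "is_submodule \<sigma> H J act N"
proof -
  have "0 \<in> N" unfolding N_def using act_b_zero Good_0 by simp
  moreover have "x + y \<in> N" if "x \<in> N" "y \<in> N" for x y
    using that unfolding N_def by (auto simp: act_addv Good_add)
  moreover have "act b' x \<in> N" if b': "b' \<in> B" and x: "x \<in> N" for b' x
  proof -
    have "Good (act b (act b' x))" if b: "b \<in> B" for b
    proof -
      have fb: "finite {n. b n \<noteq> 0}" using b unfolding BR_alg_def skew_laurent_def by blast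
      have fb': "finite {n. b' n \<noteq> 0}" using b' unfolding BR_alg_def skew_laurent_def by blast
      have "act b (act b' x) = (\<Sum>i\<in>{n. b n \<noteq> 0}. act (single i (b i)) (act b' x))"
        by (rule act_decomp[OF b])
      also have "\<dots> = (\<Sum>i\<in>{n. b n \<noteq> 0}. \<Sum>j\<in>{n. b' n \<noteq> 0}. act (single i (b i)) (act (single j (b' j)) x))"
        unfolding act_decomp[OF b', of x]
        using act_sum[OF single_in_B[OF b_coeff[OF b]] fb'] by simp
      also have "\<dots> = (\<Sum>i\<in>{n. b n \<noteq> 0}. \<Sum>j\<in>{n. b' n \<noteq> 0}. act (single (i+j) (b i * zpow \<sigma> i (b' j))) x)"
        using act_mult[OF single_in_B[OF b_coeff[OF b]] single_in_B[OF b_coeff[OF b']]]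
        by (simp add: single_mult[OF ra])
      finally have eq: "act b (act b' x) = (\<Sum>i\<in>{n. b n \<noteq> 0}. \<Sum>j\<in>{n. b' n \<noteq> 0}. act (single (i+j) (b i * zpow \<sigma> i (b' j))) x)" .
      have "Good (act (single (i+j) (b i * zpow \<sigma> i (b' j))) x)" for i j
        using x BR_I_mult[OF ra b_coeff[OF b] b_coeff[OF b']] single_in_B unfolding N_def by blast
      thus ?thesis unfolding eq using fb fb' by (auto intro!: Good_sum)
    qed
    thus ?thesis unfolding N_def by blast
  qed
  ultimately show ?thesis unfolding is_submodule_def by blast
qed

lemma v_N: "v \<in> N"
proof -
  have "Good (act b v)" if b: "b \<in> B" for b
  proof -
    have fb: "finite {n. b n \<noteq> 0}" using b unfolding BR_alg_def skew_laurent_def by blast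
    have "Good (act (single i (b i)) v)" for i
    proof (cases "i = 0")
      case True
      then show ?thesis using Good_U unfolding U_def sl_const_single by blast
    next
      case False
      show ?thesis
        by (rule Good_ws[OF orbit[OF False] omax ws_shift[OF vp b_coeff[OF b]]])
    qed
    thus ?thesis unfolding act_decomp[OF b] using fb by (auto intro!: Good_sum)
  qed
  thus ?thesis unfolding N_def by blast
qed

lemma main: assumes "is_simple_B_module \<sigma> H J act" "v \<noteq> 0"
  shows "weight_space act p \<subseteq> U"
proof
  fix w assume w: "w \<in> weight_space act p"
  have "N = {0} \<or> N = UNIV" using assms(1) N_sub unfolding is_simple_B_module_def by blast
  then have "N = UNIV" using v_N assms(2) by blast
  then have "Good (act sl_one w)" unfolding N_def sl_one_const using const_in_B by blast
  then have "Good w" using act_one by simp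
  thus "w \<in> U" using Good_final w by blast
qed

end

lemma orbit_periodic:
  assumes bj: "bij \<sigma>" and n: "n \<noteq> 0" and eq: "zpow \<sigma> n ` (zpow \<sigma> k ` m) = zpow \<sigma> k ` m"
  shows "finite (range (\<lambda>j. zpow \<sigma> j ` m))"
proof -
  define E where "E j = zpow \<sigma> j ` m" for j
  have Eadd: "E (a + b) = zpow \<sigma> a ` E b" for a b unfolding E_def by (simp add: zpow_image[OF bj])
  have "E (n + k) = E k" using eq Eadd[of n k] unfolding E_def by simp
  then have "E n = E 0" using Eadd[of "-k" "n+k"] Eadd[of "-k" k] by simp
  then have per: "E (j + n) = E j" for j using Eadd[of j n] Eadd[of j 0] by simp
  have perq: "E (j + q * n) = E j" for j q
  proof (induction q rule: int_induct[where k=0])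
    case base thus ?case by simp
  next
    case (step1 i) thus ?case using per[of "j + i * n"] by (simp add: algebra_simps)
  next
    case (step2 i) thus ?case using per[of "j + (i - 1) * n"] by (simp add: algebra_simps)
  qed
  have "E j \<in> E ` {-\<bar>n\<bar>..\<bar>n\<bar>}" for j
  proof -
    have "E j = E (j mod n)" using perq[of "j mod n" "j div n"] by (simp add: algebra_simps)
    moreover have "j mod n \<in> {-\<bar>n\<bar>..\<bar>n\<bar>}"
    proof (cases "n > 0")
      case True
      have "0 \<le> j mod n" "j mod n < n" using True by simp_all
      thus ?thesis using True unfolding atLeastAtMost_iff by linarith
    next
      case False
      then have "n < 0" using n by simp
      then have "j mod n \<le> 0" "n < j mod n" by (simp_all add: neg_mod_sign neg_mod_bound)
      thus ?thesis using \<open>n < 0\<close> unfolding atLeastAtMost_iff by linarith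
    qed
    ultimately show ?thesis by blast
  qed
  then have "range E \<subseteq> E ` {-\<bar>n\<bar>..\<bar>n\<bar>}" by blast
  thus ?thesis unfolding E_def[abs_def] by (rule finite_subset) simp
qed

theorem proposition3p4:
  fixes of_k :: "'k::field \<Rightarrow> 'r::idom"
    and \<sigma> :: "'r \<Rightarrow> 'r"
    and H J :: "'r set"
    and act :: "(int \<Rightarrow> 'r) \<Rightarrow> 'm::ab_group_add \<Rightarrow> 'm"
    and m :: "'r set"
  assumes "k_algebra_str of_k"
    and "k_alg_aut of_k \<sigma>"
    and "is_ideal H" and "is_ideal J"
    and "\<forall>n. BR_I \<sigma> H J n \<noteq> {0}"
    and "is_maximal_ideal m"
    and "infinite (range (\<lambda>k. zpow \<sigma> k ` m))"
    and "is_simple_B_module \<sigma> H J act"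
    and "is_weight_module act"
    and "weight_support act \<subseteq> range (\<lambda>k. zpow \<sigma> k ` m)"
  shows "\<forall>k::int. weight_dim act (zpow \<sigma> k ` m) \<le> 1"
proof
  fix k :: int
  have ra: "ring_aut \<sigma>" using assms(2) unfolding k_alg_aut_def ring_aut_def by blast
  have bj: "bij \<sigma>" using ra unfolding ring_aut_def by blast
  have modl: "is_B_module \<sigma> H J act" using assms(8) unfolding is_simple_B_module_def by blast
  interpret bmod \<sigma> H J act using ra modl by unfold_locales
  define p where "p = zpow \<sigma> k ` m"
  have indep: "\<forall>S w. finite S \<and> (\<forall>m\<in>S. is_maximal_ideal m \<and> w m \<in> weight_space act m) \<and>
            (\<Sum>m\<in>S. w m) = 0 \<longrightarrow> (\<forall>m\<in>S. w m = 0)"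
    using assms(9) unfolding is_weight_module_def by blast
  have orbit: "zpow \<sigma> n ` p \<noteq> p" if "n \<noteq> 0" for n
    using orbit_periodic[OF bj that] assms(7) unfolding p_def by blast
  have omax: "is_maximal_ideal (zpow \<sigma> n ` p)" for n
    unfolding p_def zpow_image[OF bj] by (rule ring_aut_maximal[OF ring_aut_zpow[OF ra] assms(6)])
  have "weight_spanned_by act p 1"
  proof (cases "weight_space act p \<subseteq> {0}")
    case True
    show ?thesis unfolding weight_spanned_by_def
    proof (rule exI[of _ "[0]"], intro conjI ballI)
      show "set [0] \<subseteq> weight_space act p" using ws_zero by simp
    next
      fix w assume "w \<in> weight_space act p"
      then have "w = 0" using True by blast
      thus "\<exists>c. w = (\<Sum>i<1. act (sl_const (c i)) ([0] ! i))" using act_b_zero[OF const_in_B] by simp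
    qed simp
  next
    case False
    then obtain v where v: "v \<in> weight_space act p" "v \<noteq> 0" by blast
    interpret bmod_pt \<sigma> H J act p v
      using v(1) indep orbit omax by unfold_locales auto
    have sub: "weight_space act p \<subseteq> U" using main[OF assms(8) v(2)] .
    show ?thesis unfolding weight_spanned_by_def
    proof (rule exI[of _ "[v]"], intro conjI ballI)
      show "set [v] \<subseteq> weight_space act p" using v by simp
    next
      fix w assume "w \<in> weight_space act p"
      then obtain c where "w = act (sl_const c) v" using sub unfolding U_def by blast
      thus "\<exists>c. w = (\<Sum>i<1. act (sl_const (c i)) ([v] ! i))" by (intro exI[of _ "\<lambda>_. c"]) simp
    qed simp
  qed
  then show "weight_dim act (zpow \<sigma> k ` m) \<le> 1"
    unfolding weight_dim_def p_def by (rule Least_le)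
qed

end
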